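(* Let $B$ be a compact curve of genus $g\ge2$, $G=\operatorname{Aut}(B)$, let $P_1,\dots,P_n$ be the points of $B$ with nontrivial stabilizer $\Sigma_{P_i}\subset G$, and let $\pi_i\colon G\to G/\Sigma_{P_i}$, $\phi\mapsto\phi\Sigma_{P_i}$. Then: (i) two automorphisms $\phi\neq\phi'$ in $G$ have intersecting graphs in $B\times B$ if and only if $\pi_i(\phi)=\pi_i(\phi')$ for some $i\in\{1,\dots,n\}$; (ii) a subset $\mathcal S\subset G$ of cardinality $m$ consists of automorphisms with pairwise non-intersecting graphs if and only if for each $i\in\{1,\dots,n\}$ the image $\pi_i(\mathcal S)$ has cardinality $m$. In particular $m\le\min_{i=1,\dots,n}|G/\Sigma_{P_i}|$. *)

theory Defs
  imports Main
begin

text \<open>Abstract model: the curve B is the carrier type 'b, and G is a finite group of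
bijections of 'b under composition (the role of Aut(B); finiteness is Hurwitz's theorem
for genus at least 2).\<close>

definition perm_group :: "('b \<Rightarrow> 'b) set \<Rightarrow> bool" where
  "perm_group G \<longleftrightarrow> id \<in> G \<and> (\<forall>\<phi>\<in>G. bij \<phi> \<and> inv \<phi> \<in> G) \<and> (\<forall>\<phi>\<in>G. \<forall>\<psi>\<in>G. \<phi> \<circ> \<psi> \<in> G)"

definition stabilizer :: "('b \<Rightarrow> 'b) set \<Rightarrow> 'b \<Rightarrow> ('b \<Rightarrow> 'b) set" where
  "stabilizer G P = {\<sigma> \<in> G. \<sigma> P = P}"

definition lcoset :: "('b \<Rightarrow> 'b) \<Rightarrow> ('b \<Rightarrow> 'b) set \<Rightarrow> ('b \<Rightarrow> 'b) set" where
  "lcoset \<phi> H = (\<lambda>\<sigma>. \<phi> \<circ> \<sigma>) ` H"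

definition lcosets :: "('b \<Rightarrow> 'b) set \<Rightarrow> ('b \<Rightarrow> 'b) set \<Rightarrow> ('b \<Rightarrow> 'b) set set" where
  "lcosets G H = (\<lambda>\<phi>. lcoset \<phi> H) ` G"

definition graph_of :: "('b \<Rightarrow> 'b) \<Rightarrow> ('b \<times> 'b) set" where
  "graph_of \<phi> = {(x, \<phi> x) | x. True}"

definition nontriv_stab_points :: "('b \<Rightarrow> 'b) set \<Rightarrow> 'b set" where
  "nontriv_stab_points G = {P. stabilizer G P \<noteq> {id}}"

end

theory Submission
  imports Defs
begin

lemma coset_sub:
  assumes G: "perm_group G" and a: "\<phi> \<in> G" and b: "\<phi>' \<in> G" and e: "\<phi> P = \<phi>' P"
  shows "lcoset \<phi> (stabilizer G P) \<subseteq> lcoset \<phi>' (stabilizer G P)"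
proof
  fix x assume "x \<in> lcoset \<phi> (stabilizer G P)"
  then obtain \<sigma> where s: "\<sigma> \<in> G" "\<sigma> P = P" and x: "x = \<phi> \<circ> \<sigma>"
    unfolding lcoset_def stabilizer_def by auto
  have bj: "bij \<phi>'" "inv \<phi>' \<in> G" using G b unfolding perm_group_def by auto
  define \<tau> where "\<tau> = inv \<phi>' \<circ> (\<phi> \<circ> \<sigma>)"
  have "\<tau> \<in> G" using G a s bj unfolding perm_group_def \<tau>_def by auto
  moreover have "\<tau> P = P" unfolding \<tau>_def using s e bj by (simp add: bij_is_inj)
  moreover have "\<phi>' \<circ> \<tau> = x" unfolding \<tau>_def x using bj
    by (auto simp: fun_eq_iff bij_is_surj surj_f_inv_f)
  ultimately show "x \<in> lcoset \<phi>' (stabilizer G P)"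
    unfolding lcoset_def stabilizer_def by force
qed

lemma coset_eq_iff:
  assumes G: "perm_group G" and a: "\<phi> \<in> G" and b: "\<phi>' \<in> G"
  shows "lcoset \<phi> (stabilizer G P) = lcoset \<phi>' (stabilizer G P) \<longleftrightarrow> \<phi> P = \<phi>' P"
proof
  assume h: "lcoset \<phi> (stabilizer G P) = lcoset \<phi>' (stabilizer G P)"
  have "id \<in> stabilizer G P" using G unfolding perm_group_def stabilizer_def by auto
  then have "\<phi>' \<in> lcoset \<phi>' (stabilizer G P)" unfolding lcoset_def
    by (rule rev_image_eqI) simp
  then have "\<phi>' \<in> lcoset \<phi> (stabilizer G P)" using h by simp
  then obtain \<sigma> where "\<sigma> P = P" "\<phi>' = \<phi> \<circ> \<sigma>" unfolding lcoset_def stabilizer_def by auto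
  then show "\<phi> P = \<phi>' P" by simp
next
  assume e: "\<phi> P = \<phi>' P"
  show "lcoset \<phi> (stabilizer G P) = lcoset \<phi>' (stabilizer G P)"
    using coset_sub[OF G a b e] coset_sub[OF G b a e[symmetric]] by (rule subset_antisym)
qed

lemma graph_int: "graph_of \<phi> \<inter> graph_of \<phi>' \<noteq> {} \<longleftrightarrow> (\<exists>x. \<phi> x = \<phi>' x)"
  unfolding graph_of_def by auto

lemma part1:
  assumes G: "perm_group G" and P: "bij_betw P {1..n} (nontriv_stab_points G)"
    and a: "\<phi> \<in> G" and b: "\<phi>' \<in> G" and ne: "\<phi> \<noteq> \<phi>'"
  shows "graph_of \<phi> \<inter> graph_of \<phi>' \<noteq> {} \<longleftrightarrow>
         (\<exists>i\<in>{1..n}. lcoset \<phi> (stabilizer G (P i)) = lcoset \<phi>' (stabilizer G (P i)))"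
proof
  assume "graph_of \<phi> \<inter> graph_of \<phi>' \<noteq> {}"
  then have "\<exists>x. \<phi> x = \<phi>' x" unfolding graph_int .
  then obtain x where ex: "\<phi> x = \<phi>' x" by (rule exE)
  have bj: "bij \<phi>" "inv \<phi> \<in> G" using G a unfolding perm_group_def by auto
  define \<sigma> where "\<sigma> = inv \<phi> \<circ> \<phi>'"
  have sG: "\<sigma> \<in> G" using G b bj unfolding perm_group_def \<sigma>_def by auto
  have sx: "\<sigma> x = x" unfolding \<sigma>_def
  proof -
    have "(inv \<phi> \<circ> \<phi>') x = inv \<phi> (\<phi> x)" using ex by simp
    also have "\<dots> = x" using bj(1) by (simp add: bij_is_inj)
    finally show "(inv \<phi> \<circ> \<phi>') x = x" .
  qed
  have "\<phi> \<circ> \<sigma> = \<phi>'" unfolding \<sigma>_def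
  proof
    fix y show "(\<phi> \<circ> (inv \<phi> \<circ> \<phi>')) y = \<phi>' y"
      using bj(1) by (simp add: bij_is_surj surj_f_inv_f)
  qed
  then have "\<sigma> \<noteq> id" using ne by (metis comp_id)
  then have "\<sigma> \<in> stabilizer G x - {id}" using sG sx unfolding stabilizer_def by simp
  then have "stabilizer G x \<noteq> {id}" by blast
  then have "x \<in> nontriv_stab_points G" unfolding nontriv_stab_points_def by simp
  then have "x \<in> P ` {1..n}" using P unfolding bij_betw_def by simp
  then obtain i where i: "i \<in> {1..n}" "x = P i" by (rule imageE)
  have "lcoset \<phi> (stabilizer G (P i)) = lcoset \<phi>' (stabilizer G (P i))"
    using coset_eq_iff[OF G a b, of "P i"] ex i(2) by simp
  then show "\<exists>i\<in>{1..n}. lcoset \<phi> (stabilizer G (P i)) = lcoset \<phi>' (stabilizer G (P i))"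
    using i(1) by (rule bexI)
next
  assume "\<exists>i\<in>{1..n}. lcoset \<phi> (stabilizer G (P i)) = lcoset \<phi>' (stabilizer G (P i))"
  then obtain i where "lcoset \<phi> (stabilizer G (P i)) = lcoset \<phi>' (stabilizer G (P i))"
    by (rule bexE)
  then have "\<phi> (P i) = \<phi>' (P i)" using coset_eq_iff[OF G a b, of "P i"] by simp
  then show "graph_of \<phi> \<inter> graph_of \<phi>' \<noteq> {}" unfolding graph_int by (rule exI)
qed

lemma disj_iff_inj:
  assumes G: "perm_group G" and P: "bij_betw P {1..n} (nontriv_stab_points G)" and S: "S \<subseteq> G"
  shows "(\<forall>\<phi>\<in>S. \<forall>\<phi>'\<in>S. \<phi> \<noteq> \<phi>' \<longrightarrow> graph_of \<phi> \<inter> graph_of \<phi>' = {}) \<longleftrightarrow>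
         (\<forall>i\<in>{1..n}. inj_on (\<lambda>\<phi>. lcoset \<phi> (stabilizer G (P i))) S)"
proof (intro iffI ballI inj_onI)
  fix i x y
  assume d: "\<forall>\<phi>\<in>S. \<forall>\<phi>'\<in>S. \<phi> \<noteq> \<phi>' \<longrightarrow> graph_of \<phi> \<inter> graph_of \<phi>' = {}"
    and i: "i \<in> {1..n}" and x: "x \<in> S" and y: "y \<in> S"
    and eq: "lcoset x (stabilizer G (P i)) = lcoset y (stabilizer G (P i))"
  show "x = y"
  proof (rule ccontr)
    assume ne: "x \<noteq> y"
    have xy: "x \<in> G" "y \<in> G" using x y S by auto
    have "graph_of x \<inter> graph_of y \<noteq> {}"
      unfolding part1[OF G P xy ne] using i eq by (rule bexI[rotated])
    moreover have "graph_of x \<inter> graph_of y = {}" using d x y ne by simp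
    ultimately show False by simp
  qed
next
  fix \<phi> \<phi>'
  assume inj: "\<forall>i\<in>{1..n}. inj_on (\<lambda>\<phi>. lcoset \<phi> (stabilizer G (P i))) S"
    and a: "\<phi> \<in> S" and b: "\<phi>' \<in> S"
  show "\<phi> \<noteq> \<phi>' \<longrightarrow> graph_of \<phi> \<inter> graph_of \<phi>' = {}"
  proof
    assume ne: "\<phi> \<noteq> \<phi>'"
    have xy: "\<phi> \<in> G" "\<phi>' \<in> G" using a b S by auto
    show "graph_of \<phi> \<inter> graph_of \<phi>' = {}"
    proof (rule ccontr)
      assume "graph_of \<phi> \<inter> graph_of \<phi>' \<noteq> {}"
      then have "\<exists>i\<in>{1..n}. lcoset \<phi> (stabilizer G (P i)) = lcoset \<phi>' (stabilizer G (P i))"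
        unfolding part1[OF G P xy ne] .
      then obtain i where i: "i \<in> {1..n}"
        and eq: "lcoset \<phi> (stabilizer G (P i)) = lcoset \<phi>' (stabilizer G (P i))"
        by (rule bexE)
      have "inj_on (\<lambda>\<phi>. lcoset \<phi> (stabilizer G (P i))) S" using inj i by (rule bspec)
      then have "\<phi> = \<phi>'" using a b eq by (simp add: inj_on_def)
      then show False using ne by simp
    qed
  qed
qed

theorem lemma5p2:
  fixes G :: "('b \<Rightarrow> 'b) set" and P :: "nat \<Rightarrow> 'b" and n :: nat
  assumes "perm_group G" and "finite G"
    and "bij_betw P {1..n} (nontriv_stab_points G)"
  shows "(\<forall>\<phi>\<in>G. \<forall>\<phi>'\<in>G. \<phi> \<noteq> \<phi>' \<longrightarrow>
            (graph_of \<phi> \<inter> graph_of \<phi>' \<noteq> {} \<longleftrightarrow>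
             (\<exists>i\<in>{1..n}. lcoset \<phi> (stabilizer G (P i)) = lcoset \<phi>' (stabilizer G (P i)))))
       \<and> (\<forall>S m. S \<subseteq> G \<and> card S = m \<longrightarrow>
            ((\<forall>\<phi>\<in>S. \<forall>\<phi>'\<in>S. \<phi> \<noteq> \<phi>' \<longrightarrow> graph_of \<phi> \<inter> graph_of \<phi>' = {}) \<longleftrightarrow>
             (\<forall>i\<in>{1..n}. card ((\<lambda>\<phi>. lcoset \<phi> (stabilizer G (P i))) ` S) = m)))
       \<and> (\<forall>S m. S \<subseteq> G \<and> card S = m \<and>
            (\<forall>\<phi>\<in>S. \<forall>\<phi>'\<in>S. \<phi> \<noteq> \<phi>' \<longrightarrow> graph_of \<phi> \<inter> graph_of \<phi>' = {}) \<longrightarrow>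
            (\<forall>i\<in>{1..n}. m \<le> card (lcosets G (stabilizer G (P i)))))"
proof (intro conjI allI impI ballI)
  fix \<phi> \<phi>' assume "\<phi> \<in> G" "\<phi>' \<in> G" "\<phi> \<noteq> \<phi>'"
  then show "graph_of \<phi> \<inter> graph_of \<phi>' \<noteq> {} \<longleftrightarrow>
             (\<exists>i\<in>{1..n}. lcoset \<phi> (stabilizer G (P i)) = lcoset \<phi>' (stabilizer G (P i)))"
    using part1[OF assms(1) assms(3)] by blast
next
  fix S :: "('b \<Rightarrow> 'b) set" and m assume h: "S \<subseteq> G \<and> card S = m"
  then have fS: "finite S" using assms(2) finite_subset by blast
  have "(\<forall>\<phi>\<in>S. \<forall>\<phi>'\<in>S. \<phi> \<noteq> \<phi>' \<longrightarrow> graph_of \<phi> \<inter> graph_of \<phi>' = {}) \<longleftrightarrow>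
        (\<forall>i\<in>{1..n}. inj_on (\<lambda>\<phi>. lcoset \<phi> (stabilizer G (P i))) S)"
    using disj_iff_inj[OF assms(1) assms(3)] h by blast
  also have "\<dots> \<longleftrightarrow> (\<forall>i\<in>{1..n}. card ((\<lambda>\<phi>. lcoset \<phi> (stabilizer G (P i))) ` S) = m)"
    using h fS by (simp add: inj_on_iff_eq_card)
  finally show "(\<forall>\<phi>\<in>S. \<forall>\<phi>'\<in>S. \<phi> \<noteq> \<phi>' \<longrightarrow> graph_of \<phi> \<inter> graph_of \<phi>' = {}) \<longleftrightarrow>
        (\<forall>i\<in>{1..n}. card ((\<lambda>\<phi>. lcoset \<phi> (stabilizer G (P i))) ` S) = m)" .
next
  fix S :: "('b \<Rightarrow> 'b) set" and m i
  assume h: "S \<subseteq> G \<and> card S = m \<and>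
            (\<forall>\<phi>\<in>S. \<forall>\<phi>'\<in>S. \<phi> \<noteq> \<phi>' \<longrightarrow> graph_of \<phi> \<inter> graph_of \<phi>' = {})"
    and i: "i \<in> {1..n}"
  then have fS: "finite S" using assms(2) finite_subset by blast
  have inj: "inj_on (\<lambda>\<phi>. lcoset \<phi> (stabilizer G (P i))) S"
    using disj_iff_inj[OF assms(1) assms(3)] h i by blast
  have "m = card ((\<lambda>\<phi>. lcoset \<phi> (stabilizer G (P i))) ` S)"
    using h card_image[OF inj] by simp
  also have "\<dots> \<le> card (lcosets G (stabilizer G (P i)))"
  proof (rule card_mono)
    show "finite (lcosets G (stabilizer G (P i)))" unfolding lcosets_def using assms(2) by simp
    have "S \<subseteq> G" using h by simp
    then show "(\<lambda>\<phi>. lcoset \<phi> (stabilizer G (P i))) ` S \<subseteq> lcosets G (stabilizer G (P i))"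
      unfolding lcosets_def by (rule image_mono)
  qed
  finally show "m \<le> card (lcosets G (stabilizer G (P i)))" .
qed

end
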